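(* Let $U\in\mathcal U_n$. Among all part listings for $U$, the one that is minimal in graded reverse lexicographic order is the area sequence of a Dyck path of length $n$.
   Context: A unit interval order on $\{1,\dots,n\}$ is given by closed intervals $I_1,\dots,I_n$ of length $1$, numbered from left to right, with $i\prec j$ iff $I_i$ lies strictly to the left of $I_j$; $\mathcal U_n$ is the set of these. For a sequence $w=(w_1,\dots,w_n)$ of nonnegative integers, $P(w)$ is the poset on $\{1,\dots,n\}$ with $i\prec j$ iff $w_j-w_i\ge2$, or $w_j-w_i=1$ and $i<j$; $w$ is a part listing for $U$ if $P(w)$ is isomorphic to $U$ as a poset. Graded reverse lexicographic order on length-$n$ sequences of nonnegative integers: $(a_1,\dots,a_n)<(b_1,\dots,b_n)$ if $\sum a_i<\sum b_i$, or if the sums are equal and $a_j>b_j$ where $j$ is the first index where the sequences differ. Area sequences of Dyck paths of length $n$ are the sequences of nonnegative integers with $a_1=0$ and $a_i\le a_{i-1}+1$. *)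

theory Defs
  imports Complex_Main
begin

text \<open>A poset on \<open>{1..n}\<close> is represented by its strict relation \<open>nat \<Rightarrow> nat \<Rightarrow> bool\<close>.
  A sequence \<open>(w_1,...,w_n)\<close> is a list \<open>w\<close> of length n, with \<open>w_i = w ! (i-1)\<close>.\<close>

text \<open>Unit interval orders: intervals \<open>I_i = [x_i, x_i + 1]\<close>, numbered left to right
  (\<open>x_1 \<le> ... \<le> x_n\<close>), with \<open>i \<prec> j\<close> iff \<open>I_i\<close> lies strictly left of \<open>I_j\<close>.\<close>
definition unit_interval_order :: "nat \<Rightarrow> (nat \<Rightarrow> nat \<Rightarrow> bool) \<Rightarrow> bool" where
  "unit_interval_order n U \<longleftrightarrow>
     (\<exists>x :: nat \<Rightarrow> real.
        (\<forall>i j. 1 \<le> i \<and> i \<le> j \<and> j \<le> n \<longrightarrow> x i \<le> x j) \<and>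
        (\<forall>i j. U i j \<longleftrightarrow> (i \<in> {1..n} \<and> j \<in> {1..n} \<and> x i + 1 < x j)))"

definition P_of :: "nat list \<Rightarrow> nat \<Rightarrow> nat \<Rightarrow> bool" where
  "P_of w i j \<longleftrightarrow>
     i \<in> {1..length w} \<and> j \<in> {1..length w} \<and>
     (int (w ! (j-1)) - int (w ! (i-1)) \<ge> 2 \<or>
      (int (w ! (j-1)) - int (w ! (i-1)) = 1 \<and> i < j))"

definition poset_iso :: "nat \<Rightarrow> (nat \<Rightarrow> nat \<Rightarrow> bool) \<Rightarrow> (nat \<Rightarrow> nat \<Rightarrow> bool) \<Rightarrow> bool" where
  "poset_iso n P Q \<longleftrightarrow>
     (\<exists>f. bij_betw f {1..n} {1..n} \<and> (\<forall>i\<in>{1..n}. \<forall>j\<in>{1..n}. P i j \<longleftrightarrow> Q (f i) (f j)))"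

definition part_listing :: "nat \<Rightarrow> (nat \<Rightarrow> nat \<Rightarrow> bool) \<Rightarrow> nat list \<Rightarrow> bool" where
  "part_listing n U w \<longleftrightarrow> length w = n \<and> poset_iso n (P_of w) U"

definition grevlex_less :: "nat list \<Rightarrow> nat list \<Rightarrow> bool" where
  "grevlex_less a b \<longleftrightarrow> length a = length b \<and>
     (sum_list a < sum_list b \<or>
      (sum_list a = sum_list b \<and>
       (\<exists>j < length a. take j a = take j b \<and> a ! j > b ! j)))"

definition area_sequence :: "nat \<Rightarrow> nat list \<Rightarrow> bool" where
  "area_sequence n a \<longleftrightarrow> length a = n \<and> (n > 0 \<longrightarrow> a ! 0 = 0) \<and>
     (\<forall>i. 0 < i \<and> i < n \<longrightarrow> a ! i \<le> a ! (i-1) + 1)"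

end

theory Submission
  imports Defs "HOL-Library.List_Lexorder" "HOL-Library.Product_Lexorder" "HOL-Library.Multiset"
begin

lemma iso_trans:
  assumes "poset_iso n P U" "bij_betw h {1..n} {1..n}"
    "\<forall>p\<in>{1..n}. \<forall>q\<in>{1..n}. Q p q \<longleftrightarrow> P (h p) (h q)"
  shows "poset_iso n Q U"
proof -
  obtain g where g: "bij_betw g {1..n} {1..n}" "\<forall>i\<in>{1..n}. \<forall>j\<in>{1..n}. P i j \<longleftrightarrow> U (g i) (g j)"
    using assms(1) unfolding poset_iso_def by blast
  have hb: "\<forall>p\<in>{1..n}. h p \<in> {1..n}" using assms(2) bij_betwE by blast
  show ?thesis unfolding poset_iso_def
    apply (rule exI[of _ "g \<circ> h"])
    using bij_betw_trans[OF assms(2) g(1)] g(2) assms(3) hb by auto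
qed

lemma rot_pl:
  assumes "part_listing n U w" "n > 0" "w!0 \<ge> 1"
  shows "part_listing n U (tl w @ [w!0 - 1])"
proof -
  let ?v = "tl w @ [w!0 - 1]"
  have len: "length w = n" using assms(1) unfolding part_listing_def by simp
  have lv: "length ?v = n" using len assms(2) by simp
  define h where "h = (\<lambda>p::nat. if p = n then 1 else p + 1)"
  have vv: "\<forall>p\<in>{1..n}. ?v!(p-1) = (if p = n then w!0 - 1 else w!p)"
    using len assms(2) by (auto simp: nth_append nth_tl)
  have hv: "\<forall>p\<in>{1..n}. w!(h p - 1) = (if p = n then w!0 else w!p)"
    unfolding h_def by auto
  have bij: "bij_betw h {1..n} {1..n}"
    apply (rule bij_betw_byWitness[where f'="\<lambda>q. if q = 1 then n else q - 1"])
    unfolding h_def using assms(2) by auto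
  have eq: "\<forall>p\<in>{1..n}. \<forall>q\<in>{1..n}. P_of ?v p q \<longleftrightarrow> P_of w (h p) (h q)"
  proof (intro ballI)
    fix p q assume p: "p \<in> {1..n}" and q: "q \<in> {1..n}"
    have hp: "h p \<in> {1..n}" "h q \<in> {1..n}" using bij p q bij_betwE by blast+
    show "P_of ?v p q \<longleftrightarrow> P_of w (h p) (h q)"
      unfolding P_of_def lv len using p q hp vv[rule_format, OF p] vv[rule_format, OF q]
        hv[rule_format, OF p] hv[rule_format, OF q] assms(3)
      by (auto simp: h_def split: if_splits)
  qed
  show ?thesis unfolding part_listing_def using lv iso_trans[OF _ bij eq] assms(1)
    unfolding part_listing_def by simp
qed

lemma rot_sum:
  fixes w :: "nat list"
  assumes "length w = n" "n > 0" "w!0 \<ge> 1"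
  shows "sum_list (tl w @ [w!0 - 1]) < sum_list w"
proof -
  have "w = w!0 # tl w" using assms by (cases w) auto
  then have "sum_list w = w!0 + sum_list (tl w)" by (metis sum_list.Cons)
  moreover have "w!0 - 1 < w!0" using assms(3) by simp
  ultimately show ?thesis by simp
qed

lemma swap_pl:
  assumes "part_listing n U w" "0 < i" "i < n" "w!i \<ge> w!(i-1) + 2"
  shows "part_listing n U (w[i-1 := w!i, i := w!(i-1)])"
proof -
  let ?v = "w[i-1 := w!i, i := w!(i-1)]"
  have len: "length w = n" using assms(1) unfolding part_listing_def by simp
  have lv: "length ?v = n" using len by simp
  define h where "h = (\<lambda>p::nat. if p = i then i + 1 else if p = i + 1 then i else p)"
  have vv: "\<forall>p\<in>{1..n}. ?v!(p-1) = w!(h p - 1)"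
    using len assms(2,3) by (auto simp: h_def nth_list_update)
  have bij: "bij_betw h {1..n} {1..n}"
    apply (rule bij_betw_byWitness[where f'="h"])
    unfolding h_def using assms(2,3) by auto
  have eq: "\<forall>p\<in>{1..n}. \<forall>q\<in>{1..n}. P_of ?v p q \<longleftrightarrow> P_of w (h p) (h q)"
  proof (intro ballI)
    fix p q assume p: "p \<in> {1..n}" and q: "q \<in> {1..n}"
    have hp: "h p \<in> {1..n}" "h q \<in> {1..n}" using bij p q bij_betwE by blast+
    have ord: "(p < q \<longleftrightarrow> h p < h q) \<or> {p, q} = {i, i+1}" unfolding h_def by auto
    have big: "{p, q} = {i, i+1} \<Longrightarrow> (int (w!(h q - 1)) - int (w!(h p - 1)) \<ge> 2 \<or> int (w!(h q - 1)) - int (w!(h p - 1)) \<le> -2)"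
      using assms(2,4) unfolding h_def by (auto simp: doubleton_eq_iff)
    show "P_of ?v p q \<longleftrightarrow> P_of w (h p) (h q)"
      unfolding P_of_def lv len using p q hp vv[rule_format, OF p] vv[rule_format, OF q] ord big
      by auto
  qed
  show ?thesis unfolding part_listing_def using lv iso_trans[OF _ bij eq] assms(1)
    unfolding part_listing_def by simp
qed

lemma exists_pl:
  assumes "unit_interval_order n U"
  shows "\<exists>w. part_listing n U w"
proof -
  obtain x :: "nat \<Rightarrow> real" where mono: "\<forall>i j. 1 \<le> i \<and> i \<le> j \<and> j \<le> n \<longrightarrow> x i \<le> x j"
    and U: "\<forall>i j. U i j \<longleftrightarrow> (i \<in> {1..n} \<and> j \<in> {1..n} \<and> x i + 1 < x j)"
    using assms unfolding unit_interval_order_def by blast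
  define y where "y i = x i - x 1" for i
  define fl where "fl i = floor (y i)" for i
  define key where "key i = (frac (y i), - fl i)" for i
  define L where "L = sort_key key [1..<Suc n]"
  define w where "w = map (\<lambda>i. nat (fl i)) L"
  have lL: "length L = n" unfolding L_def by simp
  have dL: "distinct L" unfolding L_def by simp
  have sL: "set L = {1..n}" unfolding L_def by auto
  have so: "sorted (map key L)" unfolding L_def by simp
  have keyle: "key (L!a) \<le> key (L!b)" if ab: "a \<le> b" "b < n" for a b
  proof -
    have "map key L ! a \<le> map key L ! b" using so ab lL unfolding sorted_iff_nth_mono by simp
    then show ?thesis using ab lL by simp
  qed
  have ypos: "\<And>i. i \<in> {1..n} \<Longrightarrow> y i \<ge> 0" using mono unfolding y_def by auto
  have flpos: "\<And>i. i \<in> {1..n} \<Longrightarrow> fl i \<ge> 0" using ypos unfolding fl_def by auto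
  have yfr: "\<And>i. y i = of_int (fl i) + frac (y i)" unfolding fl_def frac_def by simp
  have fr: "\<And>i. 0 \<le> frac (y i) \<and> frac (y i) < 1" by (simp add: frac_lt_1)
  define f where "f p = L!(p-1)" for p
  have Lin: "\<And>p. p \<in> {1..n} \<Longrightarrow> L!(p-1) \<in> {1..n}" using sL lL
  proof -
    fix p :: nat assume "p \<in> {1..n}"
    then have "p - 1 < length L" using lL by auto
    then have "L!(p-1) \<in> set L" by (rule nth_mem)
    then show "L!(p-1) \<in> {1..n}" using sL by simp
  qed
  have bij: "bij_betw f {1..n} {1..n}"
  proof (rule bij_betw_imageI)
    show "inj_on f {1..n}" unfolding inj_on_def f_def
      using dL lL by (auto simp: nth_eq_iff_index_eq)
    show "f ` {1..n} = {1..n}"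
    proof
      show "f ` {1..n} \<subseteq> {1..n}" using Lin f_def by auto
      show "{1..n} \<subseteq> f ` {1..n}"
      proof
        fix i assume "i \<in> {1..n}"
        then obtain k where k: "k < n" "L!k = i" using sL lL by (metis in_set_conv_nth)
        then have "f (k+1) = i" "k + 1 \<in> {1..n}" unfolding f_def by auto
        then show "i \<in> f ` {1..n}" by force
      qed
    qed
  qed
  have eq: "\<forall>p\<in>{1..n}. \<forall>q\<in>{1..n}. P_of w p q \<longleftrightarrow> U (f p) (f q)"
  proof (intro ballI)
    fix p q assume p: "p \<in> {1..n}" and q: "q \<in> {1..n}"
    define i where "i = f p"
    define j where "j = f q"
    have ij: "i \<in> {1..n}" "j \<in> {1..n}" using Lin p q unfolding i_def j_def f_def by auto
    have wp: "int (w!(p-1)) = fl i" "int (w!(q-1)) = fl j"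
      using p q lL flpos ij unfolding w_def i_def j_def f_def by auto
    have pq1: "p < q \<Longrightarrow> key i \<le> key j" using keyle[of "p-1" "q-1"] p q
      unfolding i_def j_def f_def by auto
    have pq2: "q < p \<Longrightarrow> key j \<le> key i" using keyle[of "q-1" "p-1"] p q
      unfolding i_def j_def f_def by auto
    have pq3: "p = q \<Longrightarrow> i = j" unfolding i_def j_def by simp
    have Uij: "U i j \<longleftrightarrow> y i + 1 < y j" using U ij unfolding y_def by auto
    have lw: "length w = n" unfolding w_def using lL by simp
    have "(fl j - fl i \<ge> 2 \<or> (fl j - fl i = 1 \<and> p < q)) \<longleftrightarrow> y i + 1 < y j"
    proof (cases "fl j - fl i \<ge> 2")
      case True
      then have "of_int (fl j) - of_int (fl i) \<ge> (2::real)" by linarith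
      then show ?thesis using True yfr[of i] yfr[of j] fr[of i] fr[of j] by linarith
    next
      case False
      show ?thesis
      proof (cases "fl j - fl i = 1")
        case True
        then have d: "of_int (fl j) = of_int (fl i) + (1::real)" by linarith
        show ?thesis
        proof (cases "p < q")
          case True
          then have "frac (y i) < frac (y j)" using pq1 \<open>fl j - fl i = 1\<close>
            unfolding key_def less_eq_prod_def by auto
          then show ?thesis using True d yfr[of i] yfr[of j] \<open>fl j - fl i = 1\<close> by linarith
        next
          case False
          then have "q < p \<or> p = q" by auto
          then have "frac (y j) \<le> frac (y i)" using pq2 pq3 \<open>fl j - fl i = 1\<close>
            unfolding key_def less_eq_prod_def by auto
          then show ?thesis using False d yfr[of i] yfr[of j] \<open>fl j - fl i = 1\<close> by linarith
        qed
      next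
        case False
        then have "fl j - fl i \<le> 0" using \<open>\<not> fl j - fl i \<ge> 2\<close> by linarith
        then have "of_int (fl j) - of_int (fl i) \<le> (0::real)" by linarith
        then show ?thesis using False yfr[of i] yfr[of j] fr[of i] fr[of j] by linarith
      qed
    qed
    then show "P_of w p q \<longleftrightarrow> U (f p) (f q)"
      unfolding P_of_def lw using p q wp Uij unfolding i_def j_def by auto
  qed
  have "part_listing n U w" unfolding part_listing_def poset_iso_def w_def
    using lL bij eq unfolding w_def by auto
  then show ?thesis by blast
qed

lemma lex_eq_len:
  fixes a b :: "nat list"
  assumes "length a = length b"
  shows "a < b \<longleftrightarrow> (\<exists>j < length a. take j a = take j b \<and> a ! j < b ! j)"
  using assms unfolding list_less_def lexord_take_index_conv by auto

theorem mainTheorem10: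
  fixes n :: nat and U :: "nat \<Rightarrow> nat \<Rightarrow> bool"
  assumes "unit_interval_order n U"
  shows "\<exists>w. part_listing n U w
            \<and> (\<forall>w'. part_listing n U w' \<and> w' \<noteq> w \<longrightarrow> grevlex_less w w')
            \<and> area_sequence n w"
proof -
  obtain w0 where w0: "part_listing n U w0" using exists_pl[OF assms] by blast
  define s0 where "s0 = (LEAST s. \<exists>w. part_listing n U w \<and> sum_list w = s)"
  have ex0: "\<exists>w. part_listing n U w \<and> sum_list w = s0"
    unfolding s0_def by (rule LeastI_ex) (use w0 in blast)
  have minsum: "\<And>w. part_listing n U w \<Longrightarrow> s0 \<le> sum_list w"
    unfolding s0_def by (rule Least_le) blast
  define T where "T = {w. part_listing n U w \<and> sum_list w = s0}"
  have Tsub: "T \<subseteq> {xs. set xs \<subseteq> {0..s0} \<and> length xs = n}"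
    unfolding T_def part_listing_def using member_le_sum_list by fastforce
  have finT: "finite T"
    by (rule finite_subset[OF Tsub]) (rule finite_lists_length_eq, simp)
  have neT: "T \<noteq> {}" using ex0 unfolding T_def by blast
  define w where "w = Max T"
  have wT: "w \<in> T" unfolding w_def using finT neT by (rule Max_in)
  have wmax: "\<And>v. v \<in> T \<Longrightarrow> v \<le> w" unfolding w_def using finT by (rule Max_ge)
  have wpl: "part_listing n U w" and ws: "sum_list w = s0" using wT unfolding T_def by auto
  have wl: "length w = n" using wpl unfolding part_listing_def by simp
  have min: "grevlex_less w w'" if w': "part_listing n U w'" "w' \<noteq> w" for w'
  proof -
    have wl': "length w' = n" using w' unfolding part_listing_def by simp
    show ?thesis
    proof (cases "sum_list w' = s0")
      case True
      then have "w' \<in> T" unfolding T_def using w' by simp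
      then have "w' < w" using wmax[of w'] w'(2) by (simp add: le_less)
      then obtain j where "j < length w'" "take j w' = take j w" "w' ! j < w ! j"
        using lex_eq_len[of w' w] wl wl' by auto
      then show ?thesis unfolding grevlex_less_def using wl wl' ws True by metis
    next
      case False
      then have "s0 < sum_list w'" using minsum[OF w'(1)] by simp
      then show ?thesis unfolding grevlex_less_def using wl wl' ws by simp
    qed
  qed
  have a0: "w ! 0 = 0" if "n > 0"
  proof (rule ccontr)
    assume "w ! 0 \<noteq> 0"
    then have "w!0 \<ge> 1" by simp
    from rot_pl[OF wpl that this] rot_sum[OF wl that this] minsum ws show False by fastforce
  qed
  have a1: "w ! i \<le> w ! (i-1) + 1" if "0 < i" "i < n" for i
  proof (rule ccontr)
    assume "\<not> w ! i \<le> w ! (i-1) + 1"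
    then have big: "w ! i \<ge> w ! (i-1) + 2" by simp
    define v where "v = w[i-1 := w!i, i := w!(i-1)]"
    have vpl: "part_listing n U v" unfolding v_def using swap_pl[OF wpl that big] .
    have "mset v = mset w" unfolding v_def using mset_swap[of i w "i-1"] wl that by simp
    then have "sum_list v = s0" using ws by (metis sum_mset_sum_list)
    then have "v \<in> T" unfolding T_def using vpl by simp
    then have vw: "v \<le> w" by (rule wmax)
    have lv: "length v = length w" unfolding v_def by simp
    have "take (i-1) w = take (i-1) v" unfolding v_def by simp
    moreover have "v ! (i-1) = w ! i" unfolding v_def using wl that by (simp add: nth_list_update)
    ultimately have "i - 1 < length w \<and> take (i-1) w = take (i-1) v \<and> w ! (i-1) < v ! (i-1)"
      using wl that big by simp
    then have "w < v" using lex_eq_len[of w v] lv by (metis)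
    then show False using vw by simp
  qed
  have "area_sequence n w" unfolding area_sequence_def using wl a0 a1 by simp
  then show ?thesis using wpl min by blast
qed

end
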